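(* Let $k\ge 3$, let $n_1,\dots,n_k$ be positive integers, and let $X=\nu(\mathbb{P}^{n_1}\times\cdots\times\mathbb{P}^{n_k})\subset\mathbb{P}^M$ be the Segre variety of $k$ factors. Then for each integer $x\in\{3,\dots,k-1\}$ there exists $p\in\sigma_3(X)\setminus\sigma_2(X)$ with $r_X(p)=x$.
   Context: Work over an algebraically closed field $K$. $\nu:\mathbb{P}^{n_1}\times\cdots\times\mathbb{P}^{n_k}\to\mathbb{P}^M$, $M=\prod_{i=1}^k(n_i+1)-1$, is the Segre embedding (given by $|\mathcal{O}(1,\dots,1)|$), and $X$ is its image. The $s$-th secant variety $\sigma_s(X)$ is the Zariski closure of the union of all linear spaces $\mathbb{P}^{s-1}$ spanned by $s$ points of $X$. The $X$-rank $r_X(p)$ of $p\in\mathbb{P}^M$ is the minimal $s$ such that $p$ lies in the linear span of $s$ points of $X$. *)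

theory Defs
  imports "HOL-Computational_Algebra.Polynomial"
begin

definition alg_closed :: "'a::field itself \<Rightarrow> bool" where
  "alg_closed _ \<longleftrightarrow> (\<forall>p :: 'a poly. degree p > 0 \<longrightarrow> (\<exists>z. poly p z = 0))"

text \<open>Multi-indices of the tensor space K^(n_0+1) x ... x K^(n_(k-1)+1):
  functions f with f i \<le> n i for i < k and f i = 0 for i \<ge> k.\<close>
definition idx :: "nat \<Rightarrow> (nat \<Rightarrow> nat) \<Rightarrow> (nat \<Rightarrow> nat) set" where
  "idx k n = {f. (\<forall>i<k. f i \<le> n i) \<and> (\<forall>i\<ge>k. f i = 0)}"

text \<open>The ambient affine space K^(M+1) (affine cone over P^M): tensors supported on idx.\<close>
definition tensors :: "nat \<Rightarrow> (nat \<Rightarrow> nat) \<Rightarrow> ((nat \<Rightarrow> nat) \<Rightarrow> 'a::field) set" where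
  "tensors k n = {T. \<forall>f. f \<notin> idx k n \<longrightarrow> T f = 0}"

text \<open>Nonzero decomposable tensors v_0 (x) ... (x) v_(k-1): the affine cone over the Segre variety X.\<close>
definition segre_cone :: "nat \<Rightarrow> (nat \<Rightarrow> nat) \<Rightarrow> ((nat \<Rightarrow> nat) \<Rightarrow> 'a::field) set" where
  "segre_cone k n = {T. \<exists>v :: nat \<Rightarrow> nat \<Rightarrow> 'a.
      (\<forall>i<k. \<exists>j\<le>n i. v i j \<noteq> 0) \<and>
      T = (\<lambda>f. if f \<in> idx k n then (\<Prod>i<k. v i (f i)) else 0)}"

inductive_set poly_fun :: "nat \<Rightarrow> (nat \<Rightarrow> nat) \<Rightarrow> (((nat \<Rightarrow> nat) \<Rightarrow> 'a::field) \<Rightarrow> 'a) set"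
  for k n where
  const: "(\<lambda>T. c) \<in> poly_fun k n"
| coord: "f \<in> idx k n \<Longrightarrow> (\<lambda>T. T f) \<in> poly_fun k n"
| add: "P \<in> poly_fun k n \<Longrightarrow> Q \<in> poly_fun k n \<Longrightarrow> (\<lambda>T. P T + Q T) \<in> poly_fun k n"
| mult: "P \<in> poly_fun k n \<Longrightarrow> Q \<in> poly_fun k n \<Longrightarrow> (\<lambda>T. P T * Q T) \<in> poly_fun k n"

definition zariski_closed :: "nat \<Rightarrow> (nat \<Rightarrow> nat) \<Rightarrow> ((nat \<Rightarrow> nat) \<Rightarrow> 'a::field) set \<Rightarrow> bool" where
  "zariski_closed k n C \<longleftrightarrow>
     (\<exists>S \<subseteq> poly_fun k n. C = {T \<in> tensors k n. \<forall>P\<in>S. P T = 0})"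

definition zariski_closure :: "nat \<Rightarrow> (nat \<Rightarrow> nat) \<Rightarrow> ((nat \<Rightarrow> nat) \<Rightarrow> 'a::field) set
    \<Rightarrow> ((nat \<Rightarrow> nat) \<Rightarrow> 'a) set" where
  "zariski_closure k n A = \<Inter>{C. zariski_closed k n C \<and> A \<subseteq> C}"

text \<open>Sums of s points of the Segre cone (= union of spans of s points of X, on the cone).\<close>
definition sums_of :: "nat \<Rightarrow> (nat \<Rightarrow> nat) \<Rightarrow> nat \<Rightarrow> ((nat \<Rightarrow> nat) \<Rightarrow> 'a::field) set" where
  "sums_of k n s = {T. \<exists>Ts :: nat \<Rightarrow> (nat \<Rightarrow> nat) \<Rightarrow> 'a.
      (\<forall>j<s. Ts j \<in> segre_cone k n) \<and> T = (\<lambda>f. \<Sum>j<s. Ts j f)}"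

text \<open>Affine cone over the s-th secant variety sigma_s(X).\<close>
definition secant_cone :: "nat \<Rightarrow> (nat \<Rightarrow> nat) \<Rightarrow> nat \<Rightarrow> ((nat \<Rightarrow> nat) \<Rightarrow> 'a::field) set" where
  "secant_cone k n s = zariski_closure k n (sums_of k n s)"

definition X_rank :: "nat \<Rightarrow> (nat \<Rightarrow> nat) \<Rightarrow> ((nat \<Rightarrow> nat) \<Rightarrow> 'a::field) \<Rightarrow> nat" where
  "X_rank k n T = (LEAST s. T \<in> sums_of k n s)"

end

theory Submission
  imports Defs
begin

definition chi :: "nat set \<Rightarrow> nat \<Rightarrow> nat" where
  "chi S = (\<lambda>l. if l \<in> S then 1 else 0)"

definition ind :: "nat set \<Rightarrow> (nat \<Rightarrow> nat) \<Rightarrow> 'a::field" where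
  "ind S f = (if f = chi S then 1 else 0)"

definition GG :: "nat set \<Rightarrow> 'a::field \<Rightarrow> 'a \<Rightarrow> nat set \<Rightarrow> (nat \<Rightarrow> nat) \<Rightarrow> 'a" where
  "GG A \<alpha> \<gamma> P = (\<lambda>f. (\<Sum>i\<in>A. ind {i} f) + \<alpha> * ind {} f + \<gamma> * ind P f)"

definition Cop :: "nat \<Rightarrow> 'a::field \<Rightarrow> ((nat \<Rightarrow> nat) \<Rightarrow> 'a) \<Rightarrow> (nat \<Rightarrow> nat) \<Rightarrow> 'a" where
  "Cop i c T = (\<lambda>f. if f i = 0 then T (f(i:=0)) + c * T (f(i:=1)) else 0)"

definition sl1 :: "nat \<Rightarrow> ((nat \<Rightarrow> nat) \<Rightarrow> 'a::field) \<Rightarrow> (nat \<Rightarrow> nat) \<Rightarrow> 'a" where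
  "sl1 i T = (\<lambda>f. if f i = 0 then T (f(i:=1)) else 0)"

definition lowrank :: "nat \<Rightarrow> (nat \<Rightarrow> nat) \<Rightarrow> nat \<Rightarrow> ((nat \<Rightarrow> nat) \<Rightarrow> 'a::field) \<Rightarrow> bool" where
  "lowrank k n s T \<longleftrightarrow> (\<exists>L. length L \<le> s \<and> (\<forall>D\<in>set L. D \<in> segre_cone k n \<or> D = (\<lambda>f. 0))
      \<and> T = (\<lambda>f. \<Sum>D\<leftarrow>L. D f))"

lemma chi_eq: "chi S = chi S' \<longleftrightarrow> S = S'"
  unfolding chi_def by (auto simp: fun_eq_iff split: if_splits)

lemma ind_chi: "(ind S (chi S') :: 'a::field) = (if S' = S then 1 else 0)"
  unfolding ind_def by (simp add: chi_eq)

lemma ind_upd0: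
  assumes "f i = 0"
  shows "(ind S (f(i:=0)) :: 'a::field) = (if i \<in> S then 0 else ind S f)"
  using assms unfolding ind_def chi_def by (auto simp: fun_eq_iff fun_upd_idem)

lemma ind_upd1:
  assumes "f i = 0"
  shows "(ind S (f(i:=1)) :: 'a::field) = (if i \<in> S then ind (S - {i}) f else 0)"
proof -
  have "f(i:=1) = chi S \<longleftrightarrow> i \<in> S \<and> f = chi (S - {i})"
  proof
    assume h: "f(i:=1) = chi S"
    have "i \<in> S" using fun_cong[OF h, of i] unfolding chi_def by (auto split: if_splits)
    moreover have "f = chi (S - {i})"
    proof
      fix l show "f l = chi (S - {i}) l"
        using fun_cong[OF h, of l] assms unfolding chi_def by (cases "l = i") auto
    qed
    ultimately show "i \<in> S \<and> f = chi (S - {i})" by simp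
  next
    assume "i \<in> S \<and> f = chi (S - {i})"
    then show "f(i:=1) = chi S" unfolding chi_def by (auto simp: fun_eq_iff)
  qed
  then show ?thesis unfolding ind_def by auto
qed

lemma ind_nz:
  assumes "f i \<noteq> 0" "i \<notin> S"
  shows "(ind S f :: 'a::field) = 0"
  using assms unfolding ind_def chi_def by auto

lemma ind_upd1':
  assumes "f i = 0"
  shows "(ind S (f(i:=Suc 0)) :: 'a::field) = (if i \<in> S then ind (S - {i}) f else 0)"
  using ind_upd1[of f i S, OF assms] by simp

lemma ind_zero_at:
  assumes "f i = 0" "i \<in> S"
  shows "(ind S f :: 'a::field) = 0"
  using assms unfolding ind_def chi_def by auto

lemma sum_upd0:
  assumes "finite A" "f i = 0"
  shows "(\<Sum>j\<in>A. (ind {j} f :: 'a::field)) = (\<Sum>j\<in>A-{i}. ind {j} f)"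
proof -
  have "(\<Sum>j\<in>A. (ind {j} f :: 'a)) = (\<Sum>j\<in>A-{i}. ind {j} f)"
    using assms by (intro sum.mono_neutral_right) (auto simp: ind_zero_at)
  then show ?thesis .
qed

lemma sum_upd1:
  assumes "finite A" "f i = 0"
  shows "(\<Sum>j\<in>A. (ind {j} (f(i:=Suc 0)) :: 'a::field)) = (if i \<in> A then ind {} f else 0)"
proof -
  have "(\<Sum>j\<in>A. (ind {j} (f(i:=Suc 0)) :: 'a)) = (\<Sum>j\<in>A. if j = i then ind {} f else 0)"
    using assms by (intro sum.cong) (auto simp: ind_upd1')
  also have "\<dots> = (if i \<in> A then ind {} f else 0)"
    using assms(1) by simp
  finally show ?thesis .
qed

lemma sum_nz:
  assumes "f i \<noteq> 0" "i \<notin> A"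
  shows "(\<Sum>j\<in>A. (ind {j} f :: 'a::field)) = 0"
  using assms by (intro sum.neutral) (metis ind_nz singletonD)

lemma Cop_GG_in:
  assumes "finite A" "i \<in> A" "A \<subseteq> P"
  shows "Cop i c (GG A \<alpha> \<gamma> P) = GG (A-{i}) (\<alpha>+c) (c*\<gamma>) (P-{i})"
proof
  fix f
  show "Cop i c (GG A \<alpha> \<gamma> P) f = GG (A-{i}) (\<alpha>+c) (c*\<gamma>) (P-{i}) f"
  proof (cases "f i = 0")
    case True
    have iP: "i \<in> P" using assms by auto
    have "Cop i c (GG A \<alpha> \<gamma> P) f = GG A \<alpha> \<gamma> P f + c * GG A \<alpha> \<gamma> P (f(i:=Suc 0))"
      using True by (simp add: Cop_def fun_upd_idem)
    also have "\<dots> = (\<Sum>j\<in>A-{i}. ind {j} f) + \<alpha> * ind {} f + c * (ind {} f + \<gamma> * ind (P-{i}) f)"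
      unfolding GG_def using True assms iP
      by (simp add: sum_upd1 ind_upd1' ind_zero_at sum_upd0[of A f i, OF assms(1) True])
    also have "\<dots> = GG (A-{i}) (\<alpha>+c) (c*\<gamma>) (P-{i}) f"
      unfolding GG_def by (simp add: algebra_simps)
    finally show ?thesis .
  next
    case False
    have "GG (A-{i}) (\<alpha>+c) (c*\<gamma>) (P-{i}) f = 0"
      unfolding GG_def using False by (simp add: sum_nz ind_nz)
    then show ?thesis using False by (simp add: Cop_def)
  qed
qed

lemma Cop_GG_out:
  assumes "finite A" "i \<notin> A" "i \<in> P"
  shows "Cop i c (GG A \<alpha> \<gamma> P) = GG A \<alpha> (c*\<gamma>) (P-{i})"
proof
  fix f
  show "Cop i c (GG A \<alpha> \<gamma> P) f = GG A \<alpha> (c*\<gamma>) (P-{i}) f"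
  proof (cases "f i = 0")
    case True
    have "Cop i c (GG A \<alpha> \<gamma> P) f = GG A \<alpha> \<gamma> P f + c * GG A \<alpha> \<gamma> P (f(i:=Suc 0))"
      using True by (simp add: Cop_def fun_upd_idem)
    also have "\<dots> = (\<Sum>j\<in>A. ind {j} f) + \<alpha> * ind {} f + c * (\<gamma> * ind (P-{i}) f)"
      unfolding GG_def using True assms
      by (simp add: sum_upd1 ind_upd1' ind_zero_at)
    also have "\<dots> = GG A \<alpha> (c*\<gamma>) (P-{i}) f"
      unfolding GG_def by (simp add: algebra_simps)
    finally show ?thesis .
  next
    case False
    have "GG A \<alpha> (c*\<gamma>) (P-{i}) f = 0"
      unfolding GG_def using False assms by (simp add: sum_nz ind_nz)
    then show ?thesis using False by (simp add: Cop_def)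
  qed
qed

lemma GG_chi:
  assumes "finite A"
  shows "(GG A \<alpha> \<gamma> P (chi S) :: 'a::field) =
     (if \<exists>i\<in>A. S = {i} then 1 else 0) + (if S = {} then \<alpha> else 0) + (if S = P then \<gamma> else 0)"
proof -
  have "(\<Sum>i\<in>A. (ind {i} (chi S) :: 'a)) = (if \<exists>i\<in>A. S = {i} then 1 else 0)"
  proof (cases "\<exists>i\<in>A. S = {i}")
    case True
    then obtain i where i: "i \<in> A" "S = {i}" by blast
    have "(\<Sum>j\<in>A. (ind {j} (chi S) :: 'a)) = (\<Sum>j\<in>A. if j = i then 1 else 0)"
      using i by (intro sum.cong) (auto simp: ind_chi)
    then show ?thesis using i assms by simp
  next
    case False
    then show ?thesis by (auto simp: ind_chi intro!: sum.neutral)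
  qed
  then show ?thesis unfolding GG_def by (simp add: ind_chi)
qed

lemma idx_upd:
  assumes "i < k"
  shows "f(i:=j) \<in> idx k n \<longleftrightarrow> j \<le> n i \<and> (\<forall>l<k. l \<noteq> i \<longrightarrow> f l \<le> n l) \<and> (\<forall>l\<ge>k. f l = 0)"
  using assms unfolding idx_def by auto

lemma prod_upd:
  fixes i k :: nat and f :: "nat \<Rightarrow> nat"
  assumes "i < k"
  shows "(\<Prod>l<k. (v l ((f(i:=j)) l) :: 'a::field)) = v i j * (\<Prod>l\<in>{..<k}-{i}. v l (f l))"
proof -
  have "(\<Prod>l<k. (v l ((f(i:=j)) l) :: 'a)) = v i ((f(i:=j)) i) * (\<Prod>l\<in>{..<k}-{i}. v l ((f(i:=j)) l))"
    by (rule prod.remove) (use assms in auto)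
  then have "(\<Prod>l<k. (v l ((f(i:=j)) l) :: 'a)) = v i j * (\<Prod>l\<in>{..<k}-{i}. v l ((f(i:=j)) l))"
    by simp
  also have "(\<Prod>l\<in>{..<k}-{i}. v l ((f(i:=j)) l)) = (\<Prod>l\<in>{..<k}-{i}. v l (f l))"
    by (intro prod.cong) auto
  finally show ?thesis .
qed

definition segv :: "nat \<Rightarrow> (nat \<Rightarrow> nat) \<Rightarrow> (nat \<Rightarrow> nat \<Rightarrow> 'a::field) \<Rightarrow> (nat \<Rightarrow> nat) \<Rightarrow> 'a" where
  "segv k n v = (\<lambda>f. if f \<in> idx k n then (\<Prod>i<k. v i (f i)) else 0)"

lemma segre_cone_iff: "D \<in> segre_cone k n \<longleftrightarrow> (\<exists>v. (\<forall>i<k. \<exists>j\<le>n i. v i j \<noteq> 0) \<and> D = segv k n v)"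
  unfolding segre_cone_def segv_def by auto

lemma Cop_segv:
  assumes "i < k" "1 \<le> n i"
  shows "Cop i c (segv k n v) = (\<lambda>f. (v i 0 + c * v i 1) * segv k n (v(i := (\<lambda>j. if j = 0 then 1 else 0))) f)"
proof
  fix f
  let ?v = "v(i := (\<lambda>j. if j = 0 then 1 else 0))"
  show "Cop i c (segv k n v) f = (v i 0 + c * v i 1) * segv k n ?v f"
  proof (cases "f i = 0")
    case True
    note T = True
    show ?thesis
    proof (cases "f \<in> idx k n")
      case True
      have f0: "f(i:=0) = f" using T by auto
      have i1: "f(i:=1) \<in> idx k n" using True assms unfolding idx_def by auto
      have p1: "(\<Prod>l<k. v l ((f(i:=1)) l)) = v i 1 * (\<Prod>l\<in>{..<k}-{i}. v l (f l))"
        using prod_upd[OF assms(1)] .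
      have p0: "(\<Prod>l<k. v l ((f(i:=0)) l)) = v i 0 * (\<Prod>l\<in>{..<k}-{i}. v l (f l))"
        using prod_upd[OF assms(1)] .
      have pv: "(\<Prod>l<k. ?v l (f l)) = (\<Prod>l\<in>{..<k}-{i}. v l (f l))"
      proof -
        have "(\<Prod>l<k. ?v l (f l)) = (\<Prod>l<k. ?v l ((f(i:=0)) l))" using f0 by simp
        also have "\<dots> = ?v i 0 * (\<Prod>l\<in>{..<k}-{i}. ?v l (f l))" using prod_upd[OF assms(1)] .
        also have "(\<Prod>l\<in>{..<k}-{i}. ?v l (f l)) = (\<Prod>l\<in>{..<k}-{i}. v l (f l))"
          by (intro prod.cong) auto
        finally show ?thesis by simp
      qed
      show ?thesis unfolding Cop_def segv_def using T True i1 p1 p0 pv f0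
        by (simp add: algebra_simps)
    next
      case False
      have i1: "f(i:=1) \<notin> idx k n"
      proof
        assume "f(i:=1) \<in> idx k n"
        then have "f \<in> idx k n" using T assms unfolding idx_def
          by (auto split: if_splits)
        then show False using False by simp
      qed
      show ?thesis unfolding Cop_def segv_def using T False i1 by (simp add: fun_upd_idem)
    qed
  next
    case False
    have "segv k n ?v f = 0"
    proof (cases "f \<in> idx k n")
      case True
      then show ?thesis unfolding segv_def using False assms(1)
        by (simp add: prod_zero_iff) (rule bexI[of _ i], auto)
    qed (simp add: segv_def)
    then show ?thesis using False by (simp add: Cop_def)
  qed
qed

lemma sl1_as_Cop: "sl1 i T = (\<lambda>f. Cop i 1 T f - Cop i 0 T f)"
  unfolding sl1_def Cop_def by auto

lemma sl1_segv:
  assumes "i < k" "1 \<le> n i"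
  shows "sl1 i (segv k n v) = (\<lambda>f. v i 1 * segv k n (v(i := (\<lambda>j. if j = 0 then 1 else 0))) f)"
  unfolding sl1_as_Cop Cop_segv[where i=i and k=k and n=n, OF assms] by (auto simp: algebra_simps)

lemma segv_scale:
  fixes i k :: nat
  assumes "i < k"
  shows "segv k n (v(i := (\<lambda>j. if j = 0 then d else 0))) f
        = d * (segv k n (v(i := (\<lambda>j. if j = 0 then 1 else 0))) f :: 'a::field)"
proof (cases "f \<in> idx k n")
  case True
  let ?w = "v(i := (\<lambda>j. if j = 0 then d else 0))"
  let ?u = "v(i := (\<lambda>j. if j = 0 then (1::'a) else 0))"
  have ff: "f(i := f i) = f" by simp
  have a: "(\<Prod>l<k. ?w l (f l)) = ?w i (f i) * (\<Prod>l\<in>{..<k}-{i}. ?w l (f l))"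
    using prod_upd[OF assms, of ?w f "f i"] by (simp only: ff)
  have b: "(\<Prod>l<k. ?u l (f l)) = ?u i (f i) * (\<Prod>l\<in>{..<k}-{i}. ?u l (f l))"
    using prod_upd[OF assms, of ?u f "f i"] by (simp only: ff)
  have c: "(\<Prod>l\<in>{..<k}-{i}. ?w l (f l)) = (\<Prod>l\<in>{..<k}-{i}. ?u l (f l))"
    by (intro prod.cong) auto
  show ?thesis unfolding segv_def using True a b c by simp
qed (simp add: segv_def)

lemma Cop_segv_cone:
  assumes "i < k" "1 \<le> n i" "\<forall>l<k. \<exists>j\<le>n l. v l j \<noteq> 0"
  shows "Cop i c (segv k n v) \<in> segre_cone k n \<or> Cop i c (segv k n v) = (\<lambda>f. 0)"
proof (cases "v i 0 + c * v i 1 = 0")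
  case True
  then show ?thesis unfolding Cop_segv[where i=i and k=k and n=n, OF assms(1,2)] by simp
next
  case False
  let ?d = "v i 0 + c * v i 1"
  have "Cop i c (segv k n v) = segv k n (v(i := (\<lambda>j. if j = 0 then ?d else 0)))"
    unfolding Cop_segv[where i=i and k=k and n=n, OF assms(1,2)] using segv_scale[OF assms(1), of n v ?d]
    by (simp add: fun_eq_iff)
  moreover have "\<forall>l<k. \<exists>j\<le>n l. (v(i := (\<lambda>j. if j = 0 then ?d else 0))) l j \<noteq> 0"
    using assms(3) False by auto
  ultimately show ?thesis unfolding segre_cone_iff by blast
qed

lemma Cop_sum: "Cop i c (\<lambda>f. \<Sum>D\<leftarrow>L. D f) = (\<lambda>f. \<Sum>D\<leftarrow>L. Cop i c D f)"
  by (auto simp: Cop_def fun_eq_iff sum_list_addf sum_list_const_mult)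

lemma sl1_sum: "sl1 i (\<lambda>f. \<Sum>D\<leftarrow>L. D f) = (\<lambda>f. \<Sum>D\<leftarrow>L. sl1 i D f)"
  by (induction L) (auto simp: sl1_def fun_eq_iff algebra_simps)

lemma sum_filter_nz:
  "(\<Sum>D\<leftarrow>filter (\<lambda>E. E \<noteq> (\<lambda>f. 0)) L. (D f :: 'a::field)) = (\<Sum>D\<leftarrow>L. D f)"
  by (induction L) auto

lemma sum_all_zero:
  assumes "\<forall>D\<in>set L. D = (\<lambda>f. 0)"
  shows "(\<Sum>D\<leftarrow>L. (D f :: 'a::field)) = 0"
  using assms by (induction L) auto

lemma substitution:
  assumes "lowrank k n s (T :: (nat \<Rightarrow> nat) \<Rightarrow> 'a::field)" "i < k" "1 \<le> n i" "sl1 i T \<noteq> (\<lambda>f. 0)"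
  shows "\<exists>c. lowrank k n (s - 1) (Cop i c T)"
proof -
  obtain L where L: "length L \<le> s" "\<forall>D\<in>set L. D \<in> segre_cone k n \<or> D = (\<lambda>f. 0)"
    "T = (\<lambda>f. \<Sum>D\<leftarrow>L. D f)"
    using assms(1) unfolding lowrank_def by blast
  have "\<exists>D\<in>set L. sl1 i D \<noteq> (\<lambda>f. 0)"
  proof (rule ccontr)
    assume "\<not> ?thesis"
    then have "sl1 i T = (\<lambda>f. 0)" unfolding L(3) sl1_sum using sum_all_zero[of "map (sl1 i) L"]
      by (auto simp: fun_eq_iff o_def)
    then show False using assms(4) by simp
  qed
  then obtain D where D: "D \<in> set L" "sl1 i D \<noteq> (\<lambda>f. 0)" by blast
  have "D \<noteq> (\<lambda>f. 0)" using D(2) by (auto simp: sl1_def)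
  then have "D \<in> segre_cone k n" using L(2) D(1) by blast
  then obtain v where v: "\<forall>l<k. \<exists>j\<le>n l. v l j \<noteq> 0" "D = segv k n v"
    unfolding segre_cone_iff by blast
  have v1: "v i 1 \<noteq> 0" using D(2) unfolding v(2) sl1_segv[where i=i and k=k and n=n, OF assms(2,3)] by auto
  define c where "c = - v i 0 / v i 1"
  have c: "v i 0 + c * v i 1 = 0" using v1 unfolding c_def by (simp add: field_simps)
  have CD: "Cop i c D = (\<lambda>f. 0)" unfolding v(2) Cop_segv[where i=i and k=k and n=n, OF assms(2,3)] c by simp
  define L2 where "L2 = map (Cop i c) L"
  define L3 where "L3 = filter (\<lambda>E. E \<noteq> (\<lambda>f. 0)) L2"
  have "length L3 < length L2" unfolding L3_def L2_def
    by (rule length_filter_less) (use D(1) CD in \<open>auto intro!: image_eqI[where x=D]\<close>)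
  then have len: "length L3 \<le> s - 1" using L(1) unfolding L2_def by simp
  have mem: "\<forall>E\<in>set L3. E \<in> segre_cone k n \<or> E = (\<lambda>f. 0)"
  proof
    fix E assume "E \<in> set L3"
    then obtain D' where D': "D' \<in> set L" "E = Cop i c D'" unfolding L3_def L2_def by auto
    show "E \<in> segre_cone k n \<or> E = (\<lambda>f. 0)"
    proof (cases "D' = (\<lambda>f. 0)")
      case True then show ?thesis using D' by (simp add: Cop_def fun_eq_iff)
    next
      case False
      then obtain w where w: "\<forall>l<k. \<exists>j\<le>n l. w l j \<noteq> 0" "D' = segv k n w"
        using L(2) D'(1) unfolding segre_cone_iff by blast
      show ?thesis using Cop_segv_cone[OF assms(2,3) w(1)] D'(2) w(2) by simp
    qed
  qed
  have "Cop i c T = (\<lambda>f. \<Sum>E\<leftarrow>L3. E f)"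
    unfolding L(3) Cop_sum L3_def sum_filter_nz L2_def by (simp add: o_def)
  then show ?thesis using len mem unfolding lowrank_def by blast
qed

lemma chi_upd: "(chi S)(i := Suc 0) = chi (insert i S)"
  unfolding chi_def by auto

lemma lowrank0: "lowrank k n 0 T \<Longrightarrow> T = (\<lambda>f. 0)"
  unfolding lowrank_def by auto

lemma GG_single:
  assumes "finite A" "i \<in> A" "P \<noteq> {i}"
  shows "(GG A \<alpha> \<gamma> P (chi {i}) :: 'a::field) = 1"
  using assms by (simp add: GG_chi)

lemma lowerQ:
  assumes "\<forall>l<k. 1 \<le> n l"
  shows "card A = m \<Longrightarrow> finite A \<Longrightarrow> A \<subseteq> P \<Longrightarrow> P \<subseteq> {..<k} \<Longrightarrow> A \<noteq> {} \<Longrightarrow> P - A \<noteq> {}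
     \<Longrightarrow> \<not> lowrank k n (m - 1) (GG A \<alpha> \<gamma> P :: (nat \<Rightarrow> nat) \<Rightarrow> 'a::field)"
proof (induction m arbitrary: A \<alpha> \<gamma> P)
  case 0
  then show ?case by auto
next
  case (Suc m)
  obtain i where i: "i \<in> A" using Suc.prems by auto
  have Pi: "P \<noteq> {i}" using Suc.prems i by auto
  have v1: "(GG A \<alpha> \<gamma> P (chi {i}) :: 'a) = 1" using GG_single[OF Suc.prems(2) i Pi] .
  show ?case
  proof (cases m)
    case 0
    then show ?thesis using v1 lowrank0[of k n "GG A \<alpha> \<gamma> P"] by (auto dest: fun_cong[of _ _ "chi {i}"])
  next
    case (Suc m')
    show ?thesis
    proof
      assume lr: "lowrank k n (Suc m - 1) (GG A \<alpha> \<gamma> P :: (nat \<Rightarrow> nat) \<Rightarrow> 'a)"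
      have ik: "i < k" using i Suc.prems by auto
      have "sl1 i (GG A \<alpha> \<gamma> P :: (nat \<Rightarrow> nat) \<Rightarrow> 'a) (chi {}) = 1"
        using v1 unfolding sl1_def by (simp add: chi_upd) (simp add: chi_def)
      then have sl: "sl1 i (GG A \<alpha> \<gamma> P :: (nat \<Rightarrow> nat) \<Rightarrow> 'a) \<noteq> (\<lambda>f. 0)" by (metis one_neq_zero)
      obtain c where c: "lowrank k n (Suc m - 1 - 1) (Cop i c (GG A \<alpha> \<gamma> P :: (nat \<Rightarrow> nat) \<Rightarrow> 'a))"
        using substitution[OF lr ik _ sl] assms ik by blast
      have eq: "Cop i c (GG A \<alpha> \<gamma> P) = GG (A-{i}) (\<alpha>+c) (c*\<gamma>) (P-{i})"
        using Cop_GG_in[OF Suc.prems(2) i Suc.prems(3)] .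
      have ne: "A - {i} \<noteq> {}"
      proof
        assume "A - {i} = {}"
        then have "A = {i}" using i by auto
        then show False using Suc.prems(1) \<open>m = Suc m'\<close> by simp
      qed
      have "\<not> lowrank k n (m - 1) (GG (A-{i}) (\<alpha>+c) (c*\<gamma>) (P-{i}) :: (nat \<Rightarrow> nat) \<Rightarrow> 'a)"
        apply (rule Suc.IH)
        using Suc.prems i \<open>m = Suc m'\<close> ne by auto
      then show False using c eq by simp
    qed
  qed
qed

lemma lowerM:
  assumes "\<forall>l<k. 1 \<le> n l" "finite A" "A \<subseteq> P" "P \<subseteq> {..<k}" "A \<noteq> {}" "j \<in> P - A" "P - A - {j} \<noteq> {}"
    "\<gamma> \<noteq> 0"
  shows "\<not> lowrank k n (card A) (GG A \<alpha> \<gamma> P :: (nat \<Rightarrow> nat) \<Rightarrow> 'a::field)"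
proof
  assume lr: "lowrank k n (card A) (GG A \<alpha> \<gamma> P :: (nat \<Rightarrow> nat) \<Rightarrow> 'a)"
  have jk: "j < k" using assms by auto
  have fP: "finite P" using assms(4) finite_subset by blast
  have "(GG A \<alpha> \<gamma> P :: (nat \<Rightarrow> nat) \<Rightarrow> 'a) (chi P) = \<gamma>"
  proof -
    have "\<not> (\<exists>i\<in>A. P = {i})" "P \<noteq> {}" using assms by auto
    then show ?thesis using assms(2) by (simp add: GG_chi)
  qed
  moreover have "(chi (P - {j}))(j := Suc 0) = chi P" using assms(6) by (auto simp: chi_def)
  moreover have "chi (P - {j}) j = 0" by (simp add: chi_def)
  ultimately have "sl1 j (GG A \<alpha> \<gamma> P :: (nat \<Rightarrow> nat) \<Rightarrow> 'a) (chi (P - {j})) = \<gamma>"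
    unfolding sl1_def by simp
  then have sl: "sl1 j (GG A \<alpha> \<gamma> P :: (nat \<Rightarrow> nat) \<Rightarrow> 'a) \<noteq> (\<lambda>f. 0)" using assms(8)
    by metis
  obtain c where c: "lowrank k n (card A - 1) (Cop j c (GG A \<alpha> \<gamma> P :: (nat \<Rightarrow> nat) \<Rightarrow> 'a))"
    using substitution[OF lr jk _ sl] assms(1) jk by blast
  have eq: "Cop j c (GG A \<alpha> \<gamma> P) = GG A \<alpha> (c*\<gamma>) (P-{j})"
    using Cop_GG_out[OF assms(2)] assms(6) by auto
  have "\<not> lowrank k n (card A - 1) (GG A \<alpha> (c*\<gamma>) (P-{j}) :: (nat \<Rightarrow> nat) \<Rightarrow> 'a)"
    by (rule lowerQ[OF assms(1) refl]) (use assms in auto)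
  then show False using c eq by simp
qed

lemma poly_curve:
  assumes "P \<in> poly_fun k n" "\<And>f. \<exists>q. \<forall>t. Y t f = poly q t"
  shows "\<exists>r. \<forall>t. P (Y t) = poly r t"
  using assms(1)
proof induction
  case (const c) then show ?case by (intro exI[of _ "[:c:]"]) simp
next
  case (coord f) then show ?case using assms(2)[of f] by auto
next
  case (add P Q)
  then obtain r1 r2 where "\<forall>t. P (Y t) = poly r1 t" "\<forall>t. Q (Y t) = poly r2 t" by blast
  then show ?case by (intro exI[of _ "r1 + r2"]) simp
next
  case (mult P Q)
  then obtain r1 r2 where "\<forall>t. P (Y t) = poly r1 t" "\<forall>t. Q (Y t) = poly r2 t" by blast
  then show ?case by (intro exI[of _ "r1 * r2"]) simp
qed

lemma alg_closed_infinite: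
  assumes "alg_closed TYPE('a::field)"
  shows "infinite (UNIV :: 'a set)"
proof
  assume fin: "finite (UNIV :: 'a set)"
  define p :: "'a poly" where "p = (\<Prod>a\<in>UNIV. [:-a, 1:]) + 1"
  have dprod: "degree (\<Prod>a\<in>(UNIV::'a set). [:-a, 1:]) = card (UNIV :: 'a set)"
    by (subst degree_prod_eq_sum_degree) auto
  have "card (UNIV :: 'a set) > 0" using fin by (simp add: card_gt_0_iff)
  then have "degree p > 0" unfolding p_def using dprod
    by (subst degree_add_eq_left) auto
  then obtain z where "poly p z = 0" using assms unfolding alg_closed_def by blast
  moreover have "poly (\<Prod>a\<in>(UNIV::'a set). [:-a, 1:]) z = 0"
    using fin by (simp add: poly_prod prod_zero_iff)
  ultimately show False unfolding p_def by simp
qed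

lemma poly_zero_off0:
  assumes "infinite (UNIV :: 'a::field set)" "\<forall>t. t \<noteq> 0 \<longrightarrow> poly r (t::'a) = 0"
  shows "poly r 0 = 0"
proof -
  have "UNIV - {0} \<subseteq> {t. poly r t = 0}" using assms(2) by auto
  moreover have "infinite (UNIV - {0::'a})" using assms(1) by simp
  ultimately have inf: "infinite {t. poly r t = 0}" using finite_subset by metis
  have "r = 0"
  proof (rule ccontr)
    assume "r \<noteq> 0"
    then have "finite {t. poly r t = 0}" by (rule poly_roots_finite)
    then show False using inf by simp
  qed
  then show ?thesis by simp
qed

lemma closure_curve:
  assumes "infinite (UNIV :: 'a::field set)"
    and "\<And>f. \<exists>q. \<forall>t. Y t f = poly q t"
    and "\<And>t. t \<noteq> 0 \<Longrightarrow> Y t \<in> A"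
    and "Y 0 \<in> tensors k n"
  shows "(Y 0 :: (nat \<Rightarrow> nat) \<Rightarrow> 'a) \<in> zariski_closure k n A"
  unfolding zariski_closure_def
proof (intro InterI, clarify)
  fix C assume "zariski_closed k n C" "A \<subseteq> C"
  then obtain S where S: "S \<subseteq> poly_fun k n" "C = {T \<in> tensors k n. \<forall>P\<in>S. P T = 0}"
    unfolding zariski_closed_def by blast
  have "\<forall>P\<in>S. P (Y 0) = 0"
  proof
    fix P assume P: "P \<in> S"
    obtain r where r: "\<forall>t. P (Y t) = poly r t" using poly_curve[of P k n Y] S(1) P assms(2) by blast
    have "\<forall>t. t \<noteq> 0 \<longrightarrow> poly r t = 0"
    proof (intro allI impI)
      fix t :: 'a assume "t \<noteq> 0"
      have "Y t \<in> A" using assms(3) \<open>t \<noteq> 0\<close> .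
      then have "Y t \<in> C" using \<open>A \<subseteq> C\<close> by (rule subsetD[rotated])
      then have "P (Y t) = 0" using S(2) P by simp
      then show "poly r t = 0" using r by simp
    qed
    then show "P (Y 0) = 0" using poly_zero_off0[OF assms(1)] r by simp
  qed
  then have "Y 0 \<in> {T \<in> tensors k n. \<forall>P\<in>S. P T = 0}" using assms(4) by blast
  then show "Y 0 \<in> C" using S(2) by blast
qed

definition mrg :: "nat \<Rightarrow> nat \<times> nat \<Rightarrow> (nat \<Rightarrow> nat) \<Rightarrow> nat \<Rightarrow> nat" where
  "mrg k r c = c(0 := fst r, k - 1 := snd r)"

definition ent :: "nat \<Rightarrow> (nat \<Rightarrow> nat) \<Rightarrow> (nat \<Rightarrow> nat) \<Rightarrow> ((nat \<Rightarrow> nat) \<Rightarrow> 'a::field) \<Rightarrow> 'a" where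
  "ent k n g T = (if g \<in> idx k n then T g else 0)"

definition det3 :: "(nat \<Rightarrow> nat \<Rightarrow> 'a::field) \<Rightarrow> 'a" where
  "det3 M = M 0 0 * M 1 1 * M 2 2 + M 0 1 * M 1 2 * M 2 0 + M 0 2 * M 1 0 * M 2 1
          - M 0 2 * M 1 1 * M 2 0 - M 0 0 * M 1 2 * M 2 1 - M 0 1 * M 1 0 * M 2 2"

definition minor :: "nat \<Rightarrow> (nat \<Rightarrow> nat) \<Rightarrow> (nat \<Rightarrow> nat \<times> nat) \<Rightarrow> (nat \<Rightarrow> nat \<Rightarrow> nat)
     \<Rightarrow> ((nat \<Rightarrow> nat) \<Rightarrow> 'a::field) \<Rightarrow> 'a" where
  "minor k n R C T = det3 (\<lambda>i j. ent k n (mrg k (R i) (C j)) T)"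

lemma det3_rank2:
  "det3 (\<lambda>i j. (a1 i * b1 j + a2 i * b2 j :: 'a::field)) = 0"
  unfolding det3_def by (simp add: algebra_simps)

lemma poly_fun_diff:
  assumes "P \<in> poly_fun k n" "Q \<in> poly_fun k n"
  shows "(\<lambda>T. P T - Q T) \<in> poly_fun k n"
proof -
  have "(\<lambda>T. P T + (\<lambda>T. -1) T * Q T) \<in> poly_fun k n"
    by (intro poly_fun.add poly_fun.mult poly_fun.const assms)
  then show ?thesis by simp
qed

lemma poly_fun_mult3:
  assumes "P \<in> poly_fun k n" "Q \<in> poly_fun k n" "R \<in> poly_fun k n"
  shows "(\<lambda>T. P T * Q T * R T) \<in> poly_fun k n"
proof -
  have "(\<lambda>T. (\<lambda>T. P T * Q T) T * R T) \<in> poly_fun k n"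
    by (intro poly_fun.mult assms)
  then show ?thesis by simp
qed

lemma ent_poly: "(\<lambda>T. ent k n g T) \<in> poly_fun k n"
proof (cases "g \<in> idx k n")
  case True
  then show ?thesis unfolding ent_def by (simp add: poly_fun.coord)
next
  case False
  then show ?thesis unfolding ent_def using poly_fun.const[of 0] by simp
qed

lemma det3_poly:
  assumes "\<And>i j. (\<lambda>T. M T i j) \<in> poly_fun k n"
  shows "(\<lambda>T. det3 (M T)) \<in> poly_fun k n"
proof -
  have m: "\<And>a b c d e f. (\<lambda>T. M T a b * M T c d * M T e f) \<in> poly_fun k n"
    by (rule poly_fun_mult3) (rule assms)+
  show ?thesis unfolding det3_def
    apply (rule poly_fun_diff)
     apply (rule poly_fun_diff)
      apply (rule poly_fun_diff)
       apply (rule poly_fun.add)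
        apply (rule poly_fun.add)
    by (rule m)+
qed

lemma minor_poly: "minor k n R C \<in> poly_fun k n"
proof -
  have "(\<lambda>T. det3 (\<lambda>i j. ent k n (mrg k (R i) (C j)) T)) \<in> poly_fun k n"
    by (rule det3_poly) (rule ent_poly)
  then show ?thesis unfolding minor_def by simp
qed

lemma segv_mrg:
  assumes "2 \<le> k"
  shows "\<exists>\<alpha> \<beta>. \<forall>r c. ent k n (mrg k r c) (segv k n v) = (\<alpha> r * \<beta> c :: 'a::field)"
proof -
  define K where "K = {..<k} - {0, k-1}"
  define \<alpha> where "\<alpha> r = (if fst r \<le> n 0 \<and> snd r \<le> n (k-1) then v 0 (fst r) * v (k-1) (snd r) else (0::'a))" for r
  define \<beta> where "\<beta> c = (if (\<forall>l\<in>K. c l \<le> n l) \<and> (\<forall>l\<ge>k. c l = 0) then (\<Prod>l\<in>K. v l (c l)) else 0)" for c :: "nat \<Rightarrow> nat"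
  have k0: "0 < k" "k - 1 < k" "k - 1 \<noteq> 0" using assms by auto
  have "ent k n (mrg k r c) (segv k n v) = \<alpha> r * \<beta> c" for r c
  proof -
    let ?g = "mrg k r c"
    have g0: "?g 0 = fst r" and g1: "?g (k-1) = snd r" and gl: "\<And>l. l \<noteq> 0 \<Longrightarrow> l \<noteq> k-1 \<Longrightarrow> ?g l = c l"
      unfolding mrg_def using k0 by auto
    have idx: "?g \<in> idx k n \<longleftrightarrow> (fst r \<le> n 0 \<and> snd r \<le> n (k-1)) \<and> ((\<forall>l\<in>K. c l \<le> n l) \<and> (\<forall>l\<ge>k. c l = 0))"
    proof
      assume h: "?g \<in> idx k n"
      have h1: "\<forall>i<k. ?g i \<le> n i" and h2: "\<forall>i\<ge>k. ?g i = 0" using h unfolding idx_def by simp_all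
      have "fst r \<le> n 0" using h1 g0 k0(1) by metis
      moreover have "snd r \<le> n (k-1)" using h1 g1 k0(2) by metis
      moreover have "\<forall>l\<in>K. c l \<le> n l"
      proof
        fix l assume "l \<in> K"
        then have "l < k" "l \<noteq> 0" "l \<noteq> k - 1" unfolding K_def by auto
        then show "c l \<le> n l" using h1 gl by metis
      qed
      moreover have "\<forall>l\<ge>k. c l = 0"
      proof (intro allI impI)
        fix l assume "k \<le> l"
        then have "l \<noteq> 0" "l \<noteq> k - 1" using k0 by auto
        then show "c l = 0" using h2 gl \<open>k \<le> l\<close> by metis
      qed
      ultimately show "(fst r \<le> n 0 \<and> snd r \<le> n (k-1)) \<and> ((\<forall>l\<in>K. c l \<le> n l) \<and> (\<forall>l\<ge>k. c l = 0))"
        by blast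
    next
      assume h: "(fst r \<le> n 0 \<and> snd r \<le> n (k-1)) \<and> ((\<forall>l\<in>K. c l \<le> n l) \<and> (\<forall>l\<ge>k. c l = 0))"
      have "\<forall>l<k. ?g l \<le> n l"
      proof (intro allI impI)
        fix l assume "l < k"
        show "?g l \<le> n l"
        proof (cases "l = 0")
          case True then show ?thesis using h g0 by simp
        next
          case False
          show ?thesis
          proof (cases "l = k - 1")
            case True then show ?thesis using h g1 by simp
          next
            case F2: False
            then have "l \<in> K" unfolding K_def using False \<open>l < k\<close> by simp
            then show ?thesis using h gl[OF False F2] by simp
          qed
        qed
      qed
      moreover have "\<forall>l\<ge>k. ?g l = 0"
      proof (intro allI impI)
        fix l assume "k \<le> l"
        then have "l \<noteq> 0" "l \<noteq> k - 1" using k0 by auto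
        then show "?g l = 0" using h gl \<open>k \<le> l\<close> by simp
      qed
      ultimately show "?g \<in> idx k n" unfolding idx_def by blast
    qed
    have prod: "(\<Prod>l<k. v l (?g l)) = v 0 (fst r) * v (k-1) (snd r) * (\<Prod>l\<in>K. v l (c l))"
    proof -
      have "(\<Prod>l<k. v l (?g l)) = v 0 (?g 0) * (\<Prod>l\<in>{..<k}-{0}. v l (?g l))"
        by (rule prod.remove) (use k0 in auto)
      also have "(\<Prod>l\<in>{..<k}-{0}. v l (?g l)) = v (k-1) (?g (k-1)) * (\<Prod>l\<in>{..<k}-{0}-{k-1}. v l (?g l))"
        by (rule prod.remove) (use k0 in auto)
      also have "(\<Prod>l\<in>{..<k}-{0}-{k-1}. v l (?g l)) = (\<Prod>l\<in>K. v l (c l))"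
        unfolding K_def by (intro prod.cong) (auto simp: gl)
      finally show ?thesis using g0 g1 by (simp add: mult.assoc)
    qed
    show ?thesis unfolding ent_def segv_def \<alpha>_def \<beta>_def using idx prod by auto
  qed
  then show ?thesis by blast
qed

lemma segv_tensor: "segv k n v \<in> tensors k n"
  unfolding segv_def tensors_def by auto

lemma sums2_minor:
  assumes "2 \<le> k" "T \<in> sums_of k n 2"
  shows "T \<in> tensors k n \<and> minor k n R C (T :: (nat \<Rightarrow> nat) \<Rightarrow> 'a::field) = 0"
proof -
  obtain Ts where Ts: "\<forall>j<(2::nat). Ts j \<in> segre_cone k n" "T = (\<lambda>f. \<Sum>j<(2::nat). Ts j f)"
    using assms(2) unfolding sums_of_def by blast
  have "Ts 0 \<in> segre_cone k n" "Ts 1 \<in> segre_cone k n" using Ts(1) by auto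
  then obtain v1 v2 where v1: "Ts 0 = segv k n v1" and v2: "Ts 1 = segv k n v2"
    unfolding segre_cone_iff by blast
  have T: "T = (\<lambda>f. segv k n v1 f + segv k n v2 f)" unfolding Ts(2) v1[symmetric] v2[symmetric]
    by (simp add: numeral_2_eq_2)
  obtain a1 b1 where ab1: "\<And>r c. ent k n (mrg k r c) (segv k n v1) = (a1 r * b1 c :: 'a)"
    using segv_mrg[OF assms(1)] by blast
  obtain a2 b2 where ab2: "\<And>r c. ent k n (mrg k r c) (segv k n v2) = (a2 r * b2 c :: 'a)"
    using segv_mrg[OF assms(1)] by blast
  have e: "ent k n g T = ent k n g (segv k n v1) + ent k n g (segv k n v2)" for g
    unfolding T ent_def by simp
  have "minor k n R C T = det3 (\<lambda>i j. a1 (R i) * b1 (C j) + a2 (R i) * b2 (C j))"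
    unfolding minor_def e ab1 ab2 by (rule refl)
  also have "\<dots> = 0" by (rule det3_rank2)
  finally have "minor k n R C T = 0" .
  moreover have "T \<in> tensors k n" using segv_tensor[of k n v1] segv_tensor[of k n v2]
    unfolding T tensors_def by auto
  ultimately show ?thesis by blast
qed

lemma sec2_minor:
  assumes "2 \<le> k" "T \<in> secant_cone k n 2"
  shows "minor k n R C (T :: (nat \<Rightarrow> nat) \<Rightarrow> 'a::field) = 0"
proof -
  define S where "S = {minor k n R' C' :: ((nat \<Rightarrow> nat) \<Rightarrow> 'a) \<Rightarrow> 'a | R' C'. True}"
  define Cs where "Cs = {T \<in> tensors k n. \<forall>P\<in>S. P T = 0}"
  have "S \<subseteq> poly_fun k n" unfolding S_def using minor_poly by blast
  then have cl: "zariski_closed k n Cs" unfolding zariski_closed_def Cs_def by blast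
  have sub: "sums_of k n 2 \<subseteq> Cs"
  proof
    fix U :: "(nat \<Rightarrow> nat) \<Rightarrow> 'a" assume "U \<in> sums_of k n 2"
    then have "U \<in> tensors k n \<and> minor k n R' C' U = 0" for R' C'
      using sums2_minor[OF assms(1)] by blast
    then show "U \<in> Cs" unfolding Cs_def S_def by blast
  qed
  have "T \<in> Cs" using assms(2) cl sub unfolding secant_cone_def zariski_closure_def by blast
  then show ?thesis unfolding Cs_def S_def by blast
qed

lemma chi_idx:
  assumes "\<forall>l<k. 1 \<le> n l" "S \<subseteq> {..<k}"
  shows "chi S \<in> idx k n"
  using assms unfolding idx_def chi_def by auto

lemma ind_segv:
  assumes "\<forall>l<k. 1 \<le> n l" "S \<subseteq> {..<k}"
  shows "(ind S :: (nat \<Rightarrow> nat) \<Rightarrow> 'a::field) = segv k n (\<lambda>l j. if j = chi S l then 1 else 0)"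
proof
  fix f
  show "(ind S f :: 'a) = segv k n (\<lambda>l j. if j = chi S l then 1 else 0) f"
  proof (cases "f = chi S")
    case True
    then show ?thesis using chi_idx[OF assms] unfolding ind_def segv_def by simp
  next
    case False
    show ?thesis
    proof (cases "f \<in> idx k n")
      case True
      have "\<exists>l<k. f l \<noteq> chi S l"
      proof (rule ccontr)
        assume "\<not> ?thesis"
        then have "f = chi S"
        proof -
          assume h: "\<not> (\<exists>l<k. f l \<noteq> chi S l)"
          show "f = chi S"
          proof
            fix l show "f l = chi S l"
            proof (cases "l < k")
              case True then show ?thesis using h by blast
            next
              case False then show ?thesis using \<open>f \<in> idx k n\<close> assms(2) unfolding idx_def chi_def by auto
            qed
          qed
        qed
        then show False using False by simp
      qed
      then obtain l where "l < k" "f l \<noteq> chi S l" by blast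
      then have "(\<Prod>i<k. (if f i = chi S i then 1 else 0 :: 'a)) = 0"
        by (intro prod_zero) auto
      then show ?thesis using False True unfolding ind_def segv_def by simp
    next
      case F2: False
      then show ?thesis using False unfolding ind_def segv_def by simp
    qed
  qed
qed

lemma ind_segre:
  assumes "\<forall>l<k. 1 \<le> n l" "S \<subseteq> {..<k}"
  shows "(ind S :: (nat \<Rightarrow> nat) \<Rightarrow> 'a::field) \<in> segre_cone k n"
proof -
  have V: "\<forall>i<k. \<exists>j\<le>n i. (\<lambda>l j. if j = chi S l then 1 else 0 :: 'a) i j \<noteq> 0"
  proof (intro allI impI)
    fix i assume "i < k"
    show "\<exists>j\<le>n i. (\<lambda>l j. if j = chi S l then 1 else 0 :: 'a) i j \<noteq> 0"
      using assms \<open>i < k\<close> by (intro exI[of _ "chi S i"]) (auto simp: chi_def)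
  qed
  show ?thesis unfolding segre_cone_iff ind_segv[OF assms]
    by (rule exI[of _ "\<lambda>l j. if j = chi S l then 1 else 0"]) (use V in simp)
qed

lemma segv_smult:
  assumes "0 < k" "d \<noteq> 0" "\<forall>l<k. \<exists>j\<le>n l. v l j \<noteq> 0"
  shows "(\<lambda>f. d * segv k n v f) \<in> segre_cone k n"
proof -
  let ?v = "v(0 := (\<lambda>j. d * v 0 j))"
  have E: "(\<lambda>f. d * segv k n v f) = segv k n ?v"
  proof
    fix f
    show "d * segv k n v f = segv k n ?v f"
    proof (cases "f \<in> idx k n")
      case True
      have ff: "f(0 := f 0) = f" by simp
      have a: "(\<Prod>l<k. ?v l (f l)) = ?v 0 (f 0) * (\<Prod>l\<in>{..<k}-{0}. ?v l (f l))"
        using prod_upd[OF assms(1), of ?v f "f 0"] by (simp only: ff)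
      have b: "(\<Prod>l<k. v l (f l)) = v 0 (f 0) * (\<Prod>l\<in>{..<k}-{0}. v l (f l))"
        using prod_upd[OF assms(1), of v f "f 0"] by (simp only: ff)
      have c: "(\<Prod>l\<in>{..<k}-{0}. ?v l (f l)) = (\<Prod>l\<in>{..<k}-{0}. v l (f l))"
        by (intro prod.cong) auto
      show ?thesis unfolding segv_def using True a b c by simp
    qed (simp add: segv_def)
  qed
  have V: "\<forall>l<k. \<exists>j\<le>n l. ?v l j \<noteq> 0" using assms(2,3) by auto
  show ?thesis unfolding segre_cone_iff E by (rule exI[of _ ?v]) (use V in simp)
qed

lemma sums_lowrank:
  assumes "T \<in> sums_of k n s"
  shows "lowrank k n s T"
proof -
  obtain Ts where Ts: "\<forall>j<s. Ts j \<in> segre_cone k n" "T = (\<lambda>f. \<Sum>j<s. Ts j f)"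
    using assms unfolding sums_of_def by blast
  have "(\<Sum>D\<leftarrow>map Ts [0..<s]. D f) = (\<Sum>j<s. Ts j f)" for f
  proof -
    have "(\<Sum>D\<leftarrow>map Ts [0..<s]. D f) = (\<Sum>j\<leftarrow>[0..<s]. Ts j f)" by (simp add: o_def)
    also have "\<dots> = (\<Sum>j\<in>set [0..<s]. Ts j f)" by (rule sum_set_upt_conv_sum_list_nat[symmetric])
    also have "\<dots> = (\<Sum>j<s. Ts j f)" by (simp add: atLeast0LessThan)
    finally show ?thesis .
  qed
  then have "T = (\<lambda>f. \<Sum>D\<leftarrow>map Ts [0..<s]. D f)" using Ts(2) by simp
  moreover have "\<forall>D\<in>set (map Ts [0..<s]). D \<in> segre_cone k n \<or> D = (\<lambda>f. 0)" using Ts(1) by auto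
  ultimately show ?thesis unfolding lowrank_def by (intro exI[of _ "map Ts [0..<s]"]) auto
qed

lemma lowrank_mono: "lowrank k n s T \<Longrightarrow> s \<le> s' \<Longrightarrow> lowrank k n s' T"
proof -
  assume a: "lowrank k n s T" "s \<le> s'"
  then obtain L where "length L \<le> s" "\<forall>D\<in>set L. D \<in> segre_cone k n \<or> D = (\<lambda>f. 0)" "T = (\<lambda>f. \<Sum>D\<leftarrow>L. D f)"
    unfolding lowrank_def by blast
  then show ?thesis unfolding lowrank_def using a(2) by (intro exI[of _ L]) auto
qed

lemma sum_ind_single:
  assumes "finite A"
  shows "(\<Sum>i\<in>A. (ind {i} f :: 'a::field)) = (if \<exists>i\<in>A. f = chi {i} then 1 else 0)"
proof (cases "\<exists>i\<in>A. f = chi {i}")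
  case True
  then obtain i where i: "i \<in> A" "f = chi {i}" by blast
  have "(\<Sum>j\<in>A. (ind {j} f :: 'a)) = (\<Sum>j\<in>A. if j = i then 1 else 0)"
    using i by (intro sum.cong) (auto simp: ind_chi)
  then show ?thesis using i assms by auto
next
  case False
  then show ?thesis by (auto simp: ind_def intro!: sum.neutral)
qed

lemma GG_tensor:
  assumes "\<forall>l<k. 1 \<le> n l" "A \<subseteq> {..<k}" "P \<subseteq> {..<k}"
  shows "(GG A \<alpha> \<gamma> P :: (nat \<Rightarrow> nat) \<Rightarrow> 'a::field) \<in> tensors k n"
  unfolding tensors_def
proof (intro CollectI allI impI)
  fix f assume f: "f \<notin> idx k n"
  have z: "(ind S f :: 'a) = 0" if "S \<subseteq> {..<k}" for S
    using chi_idx[OF assms(1) that] f unfolding ind_def by auto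
  have "(\<Sum>i\<in>A. (ind {i} f :: 'a)) = 0" using assms(2) by (intro sum.neutral) (auto intro: z)
  then show "(GG A \<alpha> \<gamma> P :: (nat \<Rightarrow> nat) \<Rightarrow> 'a) f = 0" unfolding GG_def using z[of "{}"] z[OF assms(3)] by simp
qed

lemma GG_sums:
  assumes "\<forall>l<k. 1 \<le> n l" "a \<le> k"
  shows "(GG {..<a} 0 1 {..<k} :: (nat \<Rightarrow> nat) \<Rightarrow> 'a::field) \<in> sums_of k n (Suc a)"
  unfolding sums_of_def
proof (intro CollectI exI conjI allI impI)
  let ?Ts = "\<lambda>j. if j < a then (ind {j} :: (nat \<Rightarrow> nat) \<Rightarrow> 'a) else ind {..<k}"
  fix j assume "j < Suc a"
  show "?Ts j \<in> segre_cone k n" using assms by (auto intro!: ind_segre)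
next
  let ?Ts = "\<lambda>j. if j < a then (ind {j} :: (nat \<Rightarrow> nat) \<Rightarrow> 'a) else ind {..<k}"
  show "(GG {..<a} 0 1 {..<k} :: (nat \<Rightarrow> nat) \<Rightarrow> 'a) = (\<lambda>f. \<Sum>j<Suc a. ?Ts j f)"
  proof
    fix f
    have "(\<Sum>j<Suc a. ?Ts j f) = (\<Sum>j<a. ?Ts j f) + ?Ts a f" by simp
    also have "(\<Sum>j<a. ?Ts j f) = (\<Sum>j<a. ind {j} f)" by (intro sum.cong) auto
    finally show "GG {..<a} 0 1 {..<k} f = (\<Sum>j<Suc a. ?Ts j f)" unfolding GG_def by simp
  qed
qed

definition good :: "nat \<Rightarrow> nat set \<Rightarrow> (nat \<Rightarrow> nat) \<Rightarrow> bool" where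
  "good k A f \<longleftrightarrow> (\<forall>l<k. f l = 0 \<or> (f l = 1 \<and> l \<in> A))"

definition cnt :: "nat \<Rightarrow> (nat \<Rightarrow> nat) \<Rightarrow> nat" where
  "cnt k f = card {l\<in>{..<k}. f l \<noteq> 0}"

definition wv :: "nat set \<Rightarrow> 'a::field \<Rightarrow> nat \<Rightarrow> nat \<Rightarrow> 'a" where
  "wv A t l j = (if j = 0 then 1 else if j = 1 \<and> l \<in> A then t else 0)"

definition qq :: "nat \<Rightarrow> (nat \<Rightarrow> nat) \<Rightarrow> nat set \<Rightarrow> (nat \<Rightarrow> nat) \<Rightarrow> 'a::field poly" where
  "qq k n A f = (if f \<in> idx k n \<and> f \<noteq> (\<lambda>_. 0) \<and> good k A f then monom 1 (cnt k f - 1) else 0)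
      + [: ind {..<k} f :]"

lemma prod_good:
  assumes "good k A f"
  shows "(\<Prod>l<k. wv A t l (f l)) = t ^ cnt k f"
proof -
  have "(\<Prod>l<k. wv A t l (f l)) = (\<Prod>l<k. if f l \<noteq> 0 then t else 1)"
    using assms unfolding good_def wv_def by (intro prod.cong) auto
  also have "\<dots> = (\<Prod>l\<in>{l\<in>{..<k}. f l \<noteq> 0}. t)" by (rule prod.inter_filter[symmetric]) simp
  also have "\<dots> = t ^ cnt k f" unfolding cnt_def by simp
  finally show ?thesis .
qed

lemma cnt_pos:
  assumes "f \<in> idx k n" "f \<noteq> (\<lambda>_. 0)"
  shows "cnt k f \<ge> 1"
proof -
  obtain l where l: "f l \<noteq> 0" using assms(2) by auto
  have "\<forall>i\<ge>k. f i = 0" using assms(1) unfolding idx_def by simp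
  then have "l < k" using l by (meson not_le)
  then have "l \<in> {l\<in>{..<k}. f l \<noteq> 0}" using l by simp
  then have "{l\<in>{..<k}. f l \<noteq> 0} \<noteq> {}" by blast
  then show ?thesis unfolding cnt_def by (simp add: Suc_le_eq card_gt_0_iff)
qed

lemma zero_chi: "(\<lambda>_. 0::nat) = chi {}" unfolding chi_def by simp

lemma zero_idx: "(\<lambda>_. 0::nat) \<in> idx k n" unfolding idx_def by simp

lemma curve_val:
  fixes t :: "'a::field"
  assumes "t \<noteq> 0"
  shows "(1/t) * segv k n (wv A t) f + (-1/t) * ind {} f + ind {..<k} f = poly (qq k n A f) t"
proof (cases "f \<in> idx k n")
  case False
  have "f \<noteq> (\<lambda>_. 0)" using False zero_idx by metis
  then have "(ind {} f :: 'a) = 0" unfolding ind_def zero_chi by simp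
  then show ?thesis using False unfolding segv_def qq_def by simp
next
  case True
  note I = True
  show ?thesis
  proof (cases "f = (\<lambda>_. 0)")
    case True
    have "(\<Prod>l<k. wv A t l (f l)) = 1" unfolding True wv_def by simp
    moreover have "(ind {} f :: 'a) = 1" unfolding ind_def zero_chi[symmetric] True by simp
    ultimately show ?thesis using I True unfolding segv_def qq_def by simp
  next
    case False
    have i0: "(ind {} f :: 'a) = 0" using False unfolding ind_def zero_chi by simp
    show ?thesis
    proof (cases "good k A f")
      case True
      have c: "cnt k f \<ge> 1" using cnt_pos[OF I False] .
      have "(1/t) * t ^ cnt k f = t ^ (cnt k f - 1)"
        using c assms by (cases "cnt k f") (auto simp: field_simps)
      then show ?thesis using I False True i0 prod_good[OF True, of t]
        unfolding segv_def qq_def by (simp add: poly_monom)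
    next
      case G: False
      then obtain l where l: "l < k" "\<not> (f l = 0 \<or> (f l = 1 \<and> l \<in> A))" unfolding good_def by blast
      then have "wv A t l (f l) = 0" unfolding wv_def by auto
      then have "(\<Prod>l<k. wv A t l (f l)) = 0" using l(1) by (intro prod_zero) auto
      then show ?thesis using I False G i0 unfolding segv_def qq_def by simp
    qed
  qed
qed

lemma curve0:
  assumes "\<forall>l<k. 1 \<le> n l" "A \<subseteq> {..<k}"
  shows "poly (qq k n A f) (0::'a::field) = (GG A 0 1 {..<k} :: (nat \<Rightarrow> nat) \<Rightarrow> 'a) f"
proof -
  have fA: "finite A" using assms(2) finite_subset by blast
  let ?c = "f \<in> idx k n \<and> f \<noteq> (\<lambda>_. 0) \<and> good k A f"
  have eqv: "(?c \<and> cnt k f = 1) \<longleftrightarrow> (\<exists>i\<in>A. f = chi {i})"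
  proof
    assume h: "?c \<and> cnt k f = 1"
    then obtain i where i: "{l\<in>{..<k}. f l \<noteq> 0} = {i}" unfolding cnt_def using card_1_singletonE by blast
    then have ik: "i < k" "f i \<noteq> 0" by auto
    then have "f i = 1" "i \<in> A" using h unfolding good_def by auto
    moreover have "f = chi {i}"
    proof
      fix l show "f l = chi {i} l"
      proof (cases "l < k")
        case lk: True
        show ?thesis
        proof (cases "l = i")
          case True then show ?thesis using \<open>f i = 1\<close> unfolding chi_def by simp
        next
          case False
          then have "l \<notin> {l\<in>{..<k}. f l \<noteq> 0}" using i by blast
          then have "f l = 0" using lk by simp
          then show ?thesis using False unfolding chi_def by simp
        qed
      next
        case False
        have "\<forall>j\<ge>k. f j = 0" using h unfolding idx_def by simp
        then have "f l = 0" using False by simp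
        moreover have "l \<noteq> i" using False ik by auto
        ultimately show ?thesis unfolding chi_def by simp
      qed
    qed
    ultimately show "\<exists>i\<in>A. f = chi {i}" by blast
  next
    assume "\<exists>i\<in>A. f = chi {i}"
    then obtain i where i: "i \<in> A" "f = chi {i}" by blast
    have ik: "i < k" using i assms(2) by auto
    have "f \<in> idx k n" using chi_idx[OF assms(1), of "{i}"] ik i by simp
    moreover have "f \<noteq> (\<lambda>_. 0)" using i unfolding chi_def by (auto simp: fun_eq_iff)
    moreover have "good k A f" using i unfolding good_def chi_def by auto
    moreover have "{l\<in>{..<k}. f l \<noteq> 0} = {i}" using i ik unfolding chi_def by auto
    ultimately show "?c \<and> cnt k f = 1" unfolding cnt_def by simp
  qed
  have "poly (qq k n A f) (0::'a) = (if ?c \<and> cnt k f = 1 then 1 else 0) + ind {..<k} f"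
  proof (cases ?c)
    case True
    then have c1: "cnt k f \<ge> 1" using cnt_pos by blast
    show ?thesis
    proof (cases "cnt k f = 1")
      case True then show ?thesis using \<open>?c\<close> unfolding qq_def by (simp add: poly_monom)
    next
      case False
      then have "cnt k f - 1 \<noteq> 0" using c1 by simp
      then show ?thesis using \<open>?c\<close> False unfolding qq_def by (simp add: poly_monom)
    qed
  next
    case False then show ?thesis unfolding qq_def by auto
  qed
  then show ?thesis unfolding GG_def sum_ind_single[OF fA] eqv by simp
qed

lemma GG_secant3:
  assumes "alg_closed TYPE('a::field)" "\<forall>l<k. 1 \<le> n l" "A \<subseteq> {..<k}" "0 < k"
  shows "(GG A 0 1 {..<k} :: (nat \<Rightarrow> nat) \<Rightarrow> 'a) \<in> secant_cone k n 3"
proof -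
  define Y where "Y = (\<lambda>(t::'a) f. poly (qq k n A f) t)"
  have c0: "\<And>f. poly (qq k n A f) (0::'a) = (GG A 0 1 {..<k} :: (nat \<Rightarrow> nat) \<Rightarrow> 'a) f"
    by (rule curve0[OF assms(2,3)])
  have Y0: "Y 0 = GG A 0 1 {..<k}" unfolding Y_def using c0 by (simp add: fun_eq_iff)
  have "Y 0 \<in> zariski_closure k n (sums_of k n 3)"
  proof (rule closure_curve)
    show "infinite (UNIV :: 'a set)" by (rule alg_closed_infinite[OF assms(1)])
    show "\<exists>q. \<forall>t. Y t f = poly q t" for f unfolding Y_def by (rule exI[of _ "qq k n A f"]) simp
    show "Y 0 \<in> tensors k n" unfolding Y0 by (rule GG_tensor) (use assms in auto)
  next
    fix t :: 'a assume t: "t \<noteq> 0"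
    let ?Ts = "\<lambda>j::nat. if j = 0 then (\<lambda>f. (1/t) * segv k n (wv A t) f)
       else if j = 1 then (\<lambda>f. (-1/t) * segv k n (\<lambda>l j. if j = chi {} l then 1 else 0) f)
       else (ind {..<k} :: (nat \<Rightarrow> nat) \<Rightarrow> 'a)"
    have V0: "\<forall>l<k. \<exists>j\<le>n l. wv A t l j \<noteq> 0"
    proof (intro allI impI)
      fix l show "\<exists>j\<le>n l. wv A t l j \<noteq> 0" by (rule exI[of _ 0]) (simp add: wv_def)
    qed
    have V1: "\<forall>l<k. \<exists>j\<le>n l. (\<lambda>l j. if j = chi {} l then 1 else (0::'a)) l j \<noteq> 0"
    proof (intro allI impI)
      fix l show "\<exists>j\<le>n l. (\<lambda>l j. if j = chi {} l then 1 else (0::'a)) l j \<noteq> 0"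
        by (rule exI[of _ 0]) (simp add: chi_def)
    qed
    have s0: "?Ts 0 \<in> segre_cone k n"
      using segv_smult[OF assms(4) _ V0, of "1/t"] t by simp
    have s1: "?Ts 1 \<in> segre_cone k n"
      using segv_smult[OF assms(4) _ V1, of "-1/t"] t by simp
    have s2: "?Ts 2 \<in> segre_cone k n" using ind_segre[OF assms(2) subset_refl[of "{..<k}"]] by simp
    have TS: "\<forall>j<3. ?Ts j \<in> segre_cone k n"
    proof (intro allI impI)
      fix j :: nat assume "j < 3"
      then have "j = 0 \<or> j = 1 \<or> j = 2" by auto
      then show "?Ts j \<in> segre_cone k n" using s0 s1 s2 by (elim disjE) simp_all
    qed
    have YT: "Y t = (\<lambda>f. \<Sum>j<3. ?Ts j f)"
    proof
      fix f
      have "(\<Sum>j<3. ?Ts j f) = ?Ts 0 f + ?Ts 1 f + ?Ts 2 f" by (simp add: numeral_3_eq_3)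
      also have "\<dots> = (1/t) * segv k n (wv A t) f + (-1/t) * ind {} f + ind {..<k} f"
      proof -
        have e: "(ind {} :: (nat \<Rightarrow> nat) \<Rightarrow> 'a) = segv k n (\<lambda>l j. if j = chi {} l then 1 else 0)"
          by (rule ind_segv[OF assms(2)]) simp
        show ?thesis by (simp add: e)
      qed
      also have "\<dots> = Y t f" unfolding Y_def using curve_val[OF t] by simp
      finally show "Y t f = (\<Sum>j<3. ?Ts j f)" by simp
    qed
    show "Y t \<in> sums_of k n 3" unfolding sums_of_def
      by (rule CollectI, rule exI[of _ ?Ts], rule conjI[OF TS YT])
  qed
  then show ?thesis unfolding secant_cone_def Y0 .
qed

lemma mrg_chi_gen: "mrg k r (chi S) = (chi S)(0 := fst r, k - 1 := snd r)"
  unfolding mrg_def by simp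

lemma upd_chi:
  "(chi S)(i := 1) = chi (insert i S)" "(chi S)(i := Suc 0) = chi (insert i S)" "(chi S)(i := 0) = chi (S - {i})"
  unfolding chi_def by (auto simp: fun_eq_iff)

lemma minor_val:
  assumes "\<forall>l<k. 1 \<le> n l" "4 \<le> k" "2 \<le> a" "a + 2 \<le> k"
  defines "R \<equiv> (\<lambda>i::nat. if i = 0 then (1::nat, 0::nat) else if i = 1 then (0, 0) else (1, 1))"
  defines "C \<equiv> (\<lambda>j::nat. if j = 0 then chi {} else if j = 1 then chi {1} else chi {l. 1 \<le> l \<and> l < k - 1})"
  shows "minor k n R C (GG {..<a} 0 1 {..<k} :: (nat \<Rightarrow> nat) \<Rightarrow> 'a::field) = 1"
proof -
  let ?T = "GG {..<a} 0 1 {..<k} :: (nat \<Rightarrow> nat) \<Rightarrow> 'a"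
  define M where "M = {l. 1 \<le> l \<and> l < k - 1}"
  have val: "ent k n (chi S) ?T = (if \<exists>i\<in>{..<a}. S = {i} then 1 else 0) + (if S = {..<k} then 1 else 0)"
    if "S \<subseteq> {..<k}" for S
    using chi_idx[OF assms(1) that] unfolding ent_def by (simp add: GG_chi)
  have k1: "k - 1 \<noteq> 0" "k - 1 \<noteq> 1" "k - 1 \<noteq> 2" "k - 1 < k" "1 < k" "2 < k" using assms by auto
  have M1: "1 \<in> M" "2 \<in> M" "0 \<notin> M" "k - 1 \<notin> M" "M \<subseteq> {..<k}" unfolding M_def using assms by auto
  have A01: "0 \<in> {..<a}" "1 \<in> {..<a}" "k - 1 \<notin> {..<a}" using assms by auto
  have ns: "\<not> (\<exists>i\<in>{..<a}. S = {i})" if "x \<in> S" "y \<in> S" "x \<noteq> y" for S and x y :: nat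
    using that by auto
  have nP: "S \<noteq> {..<k}" if "x \<notin> S" "x < k" for S and x :: nat using that by auto
  have R0: "R 0 = (1::nat, 0::nat)" and R1: "R 1 = (0::nat, 0::nat)" and R2: "R 2 = (1::nat, 1::nat)"
    unfolding R_def by simp_all
  have C0: "C 0 = chi {}" and C1: "C 1 = chi {1}" and C2: "C 2 = chi M"
    unfolding C_def M_def by simp_all
  have m00: "mrg k (1::nat, 0::nat) (chi {}) = chi ({0})"
    unfolding mrg_def chi_def M_def using k1 by (auto simp: fun_eq_iff)
  have s00: "({0}) \<subseteq> {..<k}" using M1 k1 by auto
  have hs00: "(\<exists>i\<in>{..<a}. ({0}) = {i})" using A01(1) by blast
  have hp00: "\<not> (({0}) = {..<k})" by (rule nP[of 1]) (use k1 in simp_all)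
  have e00: "ent k n (mrg k (R 0) (C 0)) ?T = 1"
    unfolding R0 C0 m00 val[OF s00]
    using hs00 hp00 by simp
  have m01: "mrg k (1::nat, 0::nat) (chi {1}) = chi ({0,1})"
    unfolding mrg_def chi_def M_def using k1 by (auto simp: fun_eq_iff)
  have s01: "({0,1}) \<subseteq> {..<k}" using M1 k1 by auto
  have hs01: "\<not> (\<exists>i\<in>{..<a}. ({0,1}) = {i})" by (rule ns[of 0 _ 1]) simp_all
  have hp01: "\<not> (({0,1}) = {..<k})" by (rule nP[of 2]) (use k1 in simp_all)
  have e01: "ent k n (mrg k (R 0) (C 1)) ?T = 0"
    unfolding R0 C1 m01 val[OF s01]
    using hs01 hp01 by simp
  have m02: "mrg k (1::nat, 0::nat) (chi M) = chi (insert 0 M)"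
    unfolding mrg_def chi_def M_def using k1 by (auto simp: fun_eq_iff)
  have s02: "(insert 0 M) \<subseteq> {..<k}" using M1 k1 by auto
  have hs02: "\<not> (\<exists>i\<in>{..<a}. (insert 0 M) = {i})" by (rule ns[of 0 _ 1]) (use M1 in simp_all)
  have hp02: "\<not> ((insert 0 M) = {..<k})" by (rule nP[of "k-1"]) (use k1 M1 in simp_all)
  have e02: "ent k n (mrg k (R 0) (C 2)) ?T = 0"
    unfolding R0 C2 m02 val[OF s02]
    using hs02 hp02 by simp
  have m10: "mrg k (0::nat, 0::nat) (chi {}) = chi ({})"
    unfolding mrg_def chi_def M_def using k1 by (auto simp: fun_eq_iff)
  have s10: "({}) \<subseteq> {..<k}" using M1 k1 by auto
  have hs10: "\<not> (\<exists>i\<in>{..<a}. ({}) = {i})" by blast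
  have hp10: "\<not> (({}) = {..<k})" by (rule nP[of 0]) (use k1 in simp_all)
  have e10: "ent k n (mrg k (R 1) (C 0)) ?T = 0"
    unfolding R1 C0 m10 val[OF s10]
    using hs10 hp10 by simp
  have m11: "mrg k (0::nat, 0::nat) (chi {1}) = chi ({1})"
    unfolding mrg_def chi_def M_def using k1 by (auto simp: fun_eq_iff)
  have s11: "({1}) \<subseteq> {..<k}" using M1 k1 by auto
  have hs11: "(\<exists>i\<in>{..<a}. ({1}) = {i})" using A01(2) by blast
  have hp11: "\<not> (({1}) = {..<k})" by (rule nP[of 0]) (use k1 in simp_all)
  have e11: "ent k n (mrg k (R 1) (C 1)) ?T = 1"
    unfolding R1 C1 m11 val[OF s11]
    using hs11 hp11 by simp
  have m12: "mrg k (0::nat, 0::nat) (chi M) = chi (M)"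
    unfolding mrg_def chi_def M_def using k1 by (auto simp: fun_eq_iff)
  have s12: "(M) \<subseteq> {..<k}" using M1 k1 by auto
  have hs12: "\<not> (\<exists>i\<in>{..<a}. (M) = {i})" by (rule ns[of 1 _ 2]) (use M1 in simp_all)
  have hp12: "\<not> ((M) = {..<k})" by (rule nP[of 0]) (use k1 M1 in simp_all)
  have e12: "ent k n (mrg k (R 1) (C 2)) ?T = 0"
    unfolding R1 C2 m12 val[OF s12]
    using hs12 hp12 by simp
  have m20: "mrg k (1::nat, 1::nat) (chi {}) = chi ({0, k-1})"
    unfolding mrg_def chi_def M_def using k1 by (auto simp: fun_eq_iff)
  have s20: "({0, k-1}) \<subseteq> {..<k}" using M1 k1 by auto
  have hs20: "\<not> (\<exists>i\<in>{..<a}. ({0, k-1}) = {i})" by (rule ns[of 0 _ "k-1"]) (use k1 in simp_all)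
  have hp20: "\<not> (({0, k-1}) = {..<k})" by (rule nP[of 1]) (use k1 in simp_all)
  have e20: "ent k n (mrg k (R 2) (C 0)) ?T = 0"
    unfolding R2 C0 m20 val[OF s20]
    using hs20 hp20 by simp
  have m21: "mrg k (1::nat, 1::nat) (chi {1}) = chi ({0, 1, k-1})"
    unfolding mrg_def chi_def M_def using k1 by (auto simp: fun_eq_iff)
  have s21: "({0, 1, k-1}) \<subseteq> {..<k}" using M1 k1 by auto
  have hs21: "\<not> (\<exists>i\<in>{..<a}. ({0, 1, k-1}) = {i})" by (rule ns[of 0 _ "k-1"]) (use k1 in simp_all)
  have hp21: "\<not> (({0, 1, k-1}) = {..<k})" by (rule nP[of 2]) (use k1 in simp_all)
  have e21: "ent k n (mrg k (R 2) (C 1)) ?T = 0"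
    unfolding R2 C1 m21 val[OF s21]
    using hs21 hp21 by simp
  have m22: "mrg k (1::nat, 1::nat) (chi M) = chi (insert 0 (insert (k-1) M))"
    unfolding mrg_def chi_def M_def using k1 by (auto simp: fun_eq_iff)
  have s22: "(insert 0 (insert (k-1) M)) \<subseteq> {..<k}" using M1 k1 by auto
  have hs22: "\<not> (\<exists>i\<in>{..<a}. (insert 0 (insert (k-1) M)) = {i})" by (rule ns[of 0 _ "k-1"]) (use k1 in simp_all)
  have hp22: "((insert 0 (insert (k-1) M)) = {..<k})" unfolding M_def using k1 by auto
  have nsP: "\<not> (\<exists>i\<in>{..<a}. {..<k} = {i})" by (rule ns[of 0 _ "k-1"]) (use k1 in simp_all)
  have e22: "ent k n (mrg k (R 2) (C 2)) ?T = 1"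
    unfolding R2 C2 m22 val[OF s22]
    using hp22 nsP by simp
  show ?thesis unfolding minor_def det3_def
    by (simp only: e00 e01 e02 e10 e11 e12 e20 e21 e22) simp
qed

theorem theorem2:
  fixes k :: nat and n :: "nat \<Rightarrow> nat" and x :: nat
  assumes "alg_closed TYPE('a::field)"
    and "k \<ge> 3"
    and "\<forall>i<k. n i \<ge> 1"
    and "3 \<le> x" and "x \<le> k - 1"
  shows "\<exists>T :: (nat \<Rightarrow> nat) \<Rightarrow> 'a. T \<in> tensors k n \<and> T \<noteq> (\<lambda>f. 0) \<and>
           T \<in> secant_cone k n 3 \<and> T \<notin> secant_cone k n 2 \<and> X_rank k n T = x"
proof -
  define a where "a = x - 1"
  have xa: "x = Suc a" using assms(4) unfolding a_def by simp
  have k4: "4 \<le> k" "2 \<le> a" "a + 2 \<le> k" using assms(2,4,5) unfolding a_def by auto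
  let ?T = "GG {..<a} 0 1 {..<k} :: (nat \<Rightarrow> nat) \<Rightarrow> 'a"
  have nl: "\<forall>l<k. 1 \<le> n l" using assms(3) by simp
  have Ak: "{..<a} \<subseteq> {..<k}" using k4 by (simp add: subset_eq)
  have k0: "0 < k" using k4 by simp
  have t1: "?T \<in> tensors k n" by (rule GG_tensor[OF nl Ak subset_refl])
  have t2: "?T \<noteq> (\<lambda>f. 0)"
  proof
    assume h: "?T = (\<lambda>f. 0)"
    have n1: "{0::nat} \<noteq> {..<k}"
    proof
      assume "{0::nat} = {..<k}"
      moreover have "(1::nat) \<in> {..<k}" using k4 by simp
      ultimately show False by (metis singletonD zero_neq_one)
    qed
    have n2: "\<exists>i\<in>{..<a}. {0::nat} = {i}" using k4 by (intro bexI[of _ 0]) simp_all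
    have "?T (chi {0}) = 1" by (simp only: GG_chi[OF finite_lessThan] n1 n2 if_True if_False) simp
    then show False using h by simp
  qed
  have t3: "?T \<in> secant_cone k n 3" by (rule GG_secant3[OF assms(1) nl Ak k0])
  have t4: "?T \<notin> secant_cone k n 2"
  proof
    assume h: "?T \<in> secant_cone k n 2"
    let ?R = "(\<lambda>i::nat. if i = 0 then (1::nat, 0::nat) else if i = 1 then (0, 0) else (1, 1))"
    let ?C = "(\<lambda>j::nat. if j = 0 then chi {} else if j = 1 then chi {1} else chi {l. 1 \<le> l \<and> l < k - 1})"
    have "minor k n ?R ?C ?T = 0" by (rule sec2_minor[OF _ h]) (use k4 in simp)
    moreover have "minor k n ?R ?C ?T = 1" by (rule minor_val[OF nl k4])
    ultimately show False by simp
  qed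
  have t5: "X_rank k n ?T = x"
    unfolding X_rank_def
  proof (rule Least_equality)
    show "?T \<in> sums_of k n x" unfolding xa by (rule GG_sums[OF nl]) (use k4 in simp)
  next
    fix s assume s: "?T \<in> sums_of k n s"
    show "x \<le> s"
    proof (rule ccontr)
      assume "\<not> x \<le> s"
      then have "s \<le> a" using xa by simp
      then have lr: "lowrank k n (card {..<a}) ?T"
        using lowrank_mono[OF sums_lowrank[OF s]] by simp
      have "\<not> lowrank k n (card {..<a}) ?T"
      proof (rule lowerM[OF nl, of "{..<a}" "{..<k}" "k - 1"])
        show "finite {..<a}" by simp
        show "{..<a} \<subseteq> {..<k}" by (rule Ak)
        show "{..<k} \<subseteq> {..<k}" by simp
        have "(0::nat) \<in> {..<a}" using k4 by simp
        then show "{..<a} \<noteq> {}" by blast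
        show "k - 1 \<in> {..<k} - {..<a}" using k4 by auto
        have "a \<in> {..<k} - {..<a} - {k - 1}" using k4 by auto
        then show "{..<k} - {..<a} - {k - 1} \<noteq> {}" by blast
        show "(1::'a) \<noteq> 0" by simp
      qed
      then show False using lr by simp
    qed
  qed
  show ?thesis by (rule exI[of _ ?T]) (intro conjI t1 t2 t3 t4 t5)
qed

end
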